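(* Let $d\ge1$, $T<\infty$, $\phi\in C_c^\infty([0,T]\times\mathbb R^{2d})$. For $\Lambda\in\mathbb N$ let $\psi_2^\Lambda:\mathbb R^d\to[0,1]$ be $C_c^\infty$, identically $1$ on the Euclidean ball $B(0,\Lambda)$ and identically $0$ outside $B(0,2\Lambda)$. Then for the $N$-particle system in the context, $$\lim_{\Lambda\to\infty}\sup_{N\in\mathbb N}\mathbb E\int_0^T\frac1{N^2}\sum_{i\in\mathcal N(t)}\sum_{j\in\mathcal N(t),j\ne i}\theta^\varepsilon(x_i^N(t)-x_j^N(t))\big|\phi(t,x_i^N(t),v_i^N(t))\,[1-\psi_2^\Lambda(v_j^N(t))]\big|dt=0.$$
   Context: Fix $d\ge1$. Let $f_0:\mathbb R^{2d}\to[0,\infty)$ be a probability density with $\|f_0\|_{L^\infty}\le\Gamma<\infty$ and support contained in the closed Euclidean ball of radius $R<\infty$ centred at the origin. Let $\theta:\mathbb R^d\to[0,\infty)$ be $C^\infty$ with $\int\theta=1$, $\theta(0)=0$, $\theta(x)=\theta(-x)$, support in the closed unit ball; $\theta^\varepsilon(x)=\varepsilon^{-d}\theta(\varepsilon^{-1}x)$, $\varepsilon=\varepsilon(N)\in(0,1]$, $\varepsilon(N)\to0$, $\limsup_N\varepsilon^{-d}/N\le1$. Let $(B_i)_{i\ge1}$ be independent standard Brownian motions in $\mathbb R^d$ and $(x_i(0),v_i(0))_{i\ge1}$ i.i.d. with density $f_0$, independent of the $B_i$. The $N$-particle system starts with active particles $1,\dots,N$; while active, $x_i^N(t)=x_i(0)+\int_0^tv_i^N(s)ds$,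 $v_i^N(t)=v_i(0)+B_i(t)$; the configuration of active particles is Markov with generator $\mathcal L_NF(\zeta)=\sum_{i}[v_i\cdot\nabla_{x_i}F+\frac12\Delta_{v_i}F](\zeta)+\sum_i\sum_{j\ne i}\frac1N\theta^\varepsilon(x_i-x_j)[F(\zeta^{-ij})-F(\zeta)]$ (sums over active indices; $\zeta^{-ij}$ removes particles $i,j$ permanently). $\mathcal N(t)$ is the set of active indices at time $t$. *)

theory Defs
  imports "HOL-Analysis.Analysis" "HOL-Probability.Probability"
begin

coinductive C_inf :: "('a::real_normed_vector \<Rightarrow> 'b::real_normed_vector) \<Rightarrow> bool" where
  "continuous_on UNIV f \<Longrightarrow> (\<forall>x. (f has_derivative f' x) (at x))
     \<Longrightarrow> (\<forall>u. C_inf (\<lambda>x. f' x u)) \<Longrightarrow> C_inf f"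

definition C_c_inf :: "('a::real_normed_vector \<Rightarrow> 'b::real_normed_vector) \<Rightarrow> bool" where
  "C_c_inf f \<longleftrightarrow> C_inf f \<and> compact (closure {x. f x \<noteq> 0})"

definition mollif :: "real \<Rightarrow> (real^'d \<Rightarrow> real) \<Rightarrow> real^'d \<Rightarrow> real" where
  "mollif e \<theta> x = \<theta> ((1 / e) *\<^sub>R x) / e ^ CARD('d)"

definition gauss_density :: "real \<Rightarrow> real^'d \<Rightarrow> real" where
  "gauss_density s x = (2 * pi * s) powr (- real CARD('d) / 2) * exp (- (norm x)\<^sup>2 / (2 * s))"

definition std_BM :: "'a measure \<Rightarrow> (real \<Rightarrow> 'a \<Rightarrow> real^'d) \<Rightarrow> bool" where
  "std_BM M B \<longleftrightarrow>
     (\<forall>t. B t \<in> borel_measurable M) \<and>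
     (\<forall>\<omega>\<in>space M. B 0 \<omega> = 0 \<and> continuous_on {0..} (\<lambda>t. B t \<omega>)) \<and>
     (\<forall>s t. 0 \<le> s \<and> s < t \<longrightarrow>
        distributed M lborel (\<lambda>\<omega>. B t \<omega> - B s \<omega>) (\<lambda>x. ennreal (gauss_density (t - s) x))) \<and>
     (\<forall>ts::real list. sorted ts \<and> (\<forall>t\<in>set ts. 0 \<le> t) \<longrightarrow>
        prob_space.indep_vars M (\<lambda>_. borel) (\<lambda>k \<omega>. B (ts ! Suc k) \<omega> - B (ts ! k) \<omega>) {..<length ts - 1})"

definition vel :: "(nat \<Rightarrow> 'a \<Rightarrow> (real^'d) \<times> (real^'d)) \<Rightarrow> (nat \<Rightarrow> real \<Rightarrow> 'a \<Rightarrow> real^'d)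
    \<Rightarrow> nat \<Rightarrow> real \<Rightarrow> 'a \<Rightarrow> real^'d" where
  "vel X0 B i t \<omega> = snd (X0 i \<omega>) + B i t \<omega>"

definition pos :: "(nat \<Rightarrow> 'a \<Rightarrow> (real^'d) \<times> (real^'d)) \<Rightarrow> (nat \<Rightarrow> real \<Rightarrow> 'a \<Rightarrow> real^'d)
    \<Rightarrow> nat \<Rightarrow> real \<Rightarrow> 'a \<Rightarrow> real^'d" where
  "pos X0 B i t \<omega> = fst (X0 i \<omega>) + integral {0..t} (\<lambda>s. vel X0 B i s \<omega>)"

text \<open>Independence of two random variables with possibly different value spaces
  (same as the library's indep_var, which requires a common value type).\<close>
definition indep_rv :: "'a measure \<Rightarrow> 'b measure \<Rightarrow> ('a \<Rightarrow> 'b) \<Rightarrow> 'c measure \<Rightarrow> ('a \<Rightarrow> 'c) \<Rightarrow> bool" where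
  "indep_rv M MX X MY Y \<longleftrightarrow> X \<in> measurable M MX \<and> Y \<in> measurable M MY \<and>
     prob_space.indep_set M {X -` A \<inter> space M | A. A \<in> sets MX} {Y -` A \<inter> space M | A. A \<in> sets MY}"

end

theory Submission
  imports Defs
begin

lemma riemann_sum_tendsto:
  fixes p :: "real \<Rightarrow> 'b::banach"
  assumes cont: "continuous_on {0..t} p" and t0: "0 \<le> t"
  shows "(\<lambda>n. \<Sum>k<n. (t / real n) *\<^sub>R p (real k * t / real n)) \<longlonglongrightarrow> integral {0..t} p"
proof (cases "t = 0")
  case True
  then show ?thesis by simp
next
  case False
  with t0 have tpos: "t > 0" by simp
  show ?thesis
  proof (rule LIMSEQ_I)
    fix e :: real assume e: "e > 0"
    define e' where "e' = e / (2 * t)"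
    have e': "e' > 0" using e tpos by (simp add: e'_def)
    have "uniformly_continuous_on {0..t} p"
      using cont by (simp add: compact_uniformly_continuous)
    then obtain d where d: "d > 0" and dd: "\<And>x y. x \<in> {0..t} \<Longrightarrow> y \<in> {0..t} \<Longrightarrow> dist y x < d \<Longrightarrow> dist (p y) (p x) < e'"
      using e' unfolding uniformly_continuous_on_def by metis
    obtain N :: nat where N: "t / d < real N" using reals_Archimedean2 by blast
    have Npos: "N > 0" using N tpos d by (cases N) (auto, smt (verit) divide_pos_pos)
    show "\<exists>N. \<forall>n\<ge>N. norm ((\<Sum>k<n. (t / real n) *\<^sub>R p (real k * t / real n)) - integral {0..t} p) < e"
    proof (intro exI allI impI)
      fix n assume nN: "N \<le> n"
      define h where "h = t / real n"
      have npos: "real n > 0" using nN Npos by simp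
      have hpos: "h > 0" using npos tpos by (simp add: h_def)
      have hd: "h < d"
      proof -
        have "t / d < real n" using N nN by (meson less_le_trans of_nat_le_iff)
        then have "t < d * real n" using d by (simp add: field_simps)
        then show ?thesis using npos by (simp add: h_def field_simps)
      qed
      have nh: "real n * h = t" using npos by (simp add: h_def)
      have split: "integral {0..real m * h} p = (\<Sum>k<m. integral {real k * h..real (Suc k) * h} p)" if "m \<le> n" for m
        using that
      proof (induction m)
        case 0 then show ?case by simp
      next
        case (Suc m)
        have sub: "real (Suc m) * h \<le> t" using Suc.prems nh hpos
          by (metis mult_right_mono of_nat_le_iff less_imp_le)
        have int: "p integrable_on {0..real (Suc m) * h}"
          by (rule integrable_continuous_interval, rule continuous_on_subset[OF cont]) (use sub in auto)
        have "integral {0..real (Suc m) * h} p = integral {0..real m * h} p + integral {real m * h..real (Suc m) * h} p"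
          by (rule Henstock_Kurzweil_Integration.integral_combine[symmetric]) (use hpos int in auto)
        then show ?case using Suc by simp
      qed
      have "integral {0..t} p = (\<Sum>k<n. integral {real k * h..real (Suc k) * h} p)"
        using split[of n] nh by simp
      then have "(\<Sum>k<n. (t / real n) *\<^sub>R p (real k * t / real n)) - integral {0..t} p
          = (\<Sum>k<n. h *\<^sub>R p (real k * h) - integral {real k * h..real (Suc k) * h} p)"
        by (simp add: sum_subtractf h_def)
      also have "norm \<dots> \<le> (\<Sum>k<n. norm (h *\<^sub>R p (real k * h) - integral {real k * h..real (Suc k) * h} p))"
        by (rule norm_sum)
      also have "\<dots> \<le> (\<Sum>k<n. e' * h)"
      proof (rule sum_mono)
        fix k assume k: "k \<in> {..<n}"
        have kh: "real (Suc k) * h \<le> t" using k nh hpos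
          by (metis Suc_leI lessThan_iff mult_right_mono of_nat_le_iff less_imp_le)
        have k0: "0 \<le> real k * h" using hpos by simp
        have cs: "continuous_on {real k * h..real (Suc k) * h} p"
          by (rule continuous_on_subset[OF cont]) (use kh k0 in auto)
        have eq: "h *\<^sub>R p (real k * h) - integral {real k * h..real (Suc k) * h} p
           = - integral {real k * h..real (Suc k) * h} (\<lambda>s. p s - p (real k * h))"
        proof -
          have "integral {real k * h..real (Suc k) * h} (\<lambda>s. p s - p (real k * h))
              = integral {real k * h..real (Suc k) * h} p - integral {real k * h..real (Suc k) * h} (\<lambda>s. p (real k * h))"
            by (rule integral_diff) (use cs integrable_continuous_interval in auto)
          moreover have "integral {real k * h..real (Suc k) * h} (\<lambda>s. p (real k * h)) = h *\<^sub>R p (real k * h)"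
            using hpos by (simp add: algebra_simps)
          ultimately show ?thesis using hpos by (simp add: algebra_simps)
        qed
        have "norm (integral {real k * h..real (Suc k) * h} (\<lambda>s. p s - p (real k * h))) \<le> e' * (real (Suc k) * h - real k * h)"
        proof (rule integral_bound)
          show "real k * h \<le> real (Suc k) * h" using hpos by simp
          show "continuous_on {real k * h..real (Suc k) * h} (\<lambda>s. p s - p (real k * h))"
            using cs by (intro continuous_intros) auto
          fix s assume s: "s \<in> {real k * h..real (Suc k) * h}"
          have "dist (p s) (p (real k * h)) < e'"
            by (rule dd) (use s kh k0 hd hpos in \<open>auto simp: dist_real_def algebra_simps intro: order_trans[OF k0]\<close>)
          then show "norm (p s - p (real k * h)) \<le> e'" by (simp add: dist_norm)
        qed
        also have "\<dots> = e' * h" by (simp add: algebra_simps)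
        finally show "norm (h *\<^sub>R p (real k * h) - integral {real k * h..real (Suc k) * h} p) \<le> e' * h"
          using eq by simp
      qed
      also have "\<dots> = e' * t" using nh by (simp add: algebra_simps)
      also have "\<dots> < e" using e tpos by (simp add: e'_def)
      finally show "norm ((\<Sum>k<n. (t / real n) *\<^sub>R p (real k * t / real n)) - integral {0..t} p) < e" .
    qed
  qed
qed

lemma ceil_approx_tendsto: "(\<lambda>n. real_of_int \<lceil>s * real (Suc n)\<rceil> / real (Suc n)) \<longlonglongrightarrow> s"
proof (rule tendsto_sandwich[where f="\<lambda>n. s" and h="\<lambda>n. s + 1 / real (Suc n)"])
  show "\<forall>\<^sub>F n in sequentially. s \<le> real_of_int \<lceil>s * real (Suc n)\<rceil> / real (Suc n)"
  proof (intro always_eventually allI)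
    fix n
    have "s * real (Suc n) \<le> real_of_int \<lceil>s * real (Suc n)\<rceil>" by simp
    then show "s \<le> real_of_int \<lceil>s * real (Suc n)\<rceil> / real (Suc n)"
      by (simp add: field_simps)
  qed
  show "\<forall>\<^sub>F n in sequentially. real_of_int \<lceil>s * real (Suc n)\<rceil> / real (Suc n) \<le> s + 1 / real (Suc n)"
  proof (intro always_eventually allI)
    fix n
    have "real_of_int \<lceil>s * real (Suc n)\<rceil> \<le> s * real (Suc n) + 1"
      by linarith
    then have "real_of_int \<lceil>s * real (Suc n)\<rceil> / real (Suc n) \<le> (s * real (Suc n) + 1) / real (Suc n)"
      by (rule divide_right_mono) auto
    also have "\<dots> = s + 1 / real (Suc n)" by (simp add: add_divide_distrib)
    finally show "real_of_int \<lceil>s * real (Suc n)\<rceil> / real (Suc n) \<le> s + 1 / real (Suc n)" .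
  qed
  show "(\<lambda>n. s) \<longlonglongrightarrow> s" by simp
  have "(\<lambda>n. 1 / real (Suc n)) \<longlonglongrightarrow> 0" by (rule LIMSEQ_Suc[OF lim_const_over_n[of 1]])
  then show "(\<lambda>n. s + 1 / real (Suc n)) \<longlonglongrightarrow> s" using tendsto_add[of "\<lambda>n. s" s sequentially] by force
qed

lemma caratheodory_meas:
  fixes f :: "real \<Rightarrow> 'a \<Rightarrow> 'b::metric_space"
  assumes ab: "a \<le> b"
    and meas: "\<And>t. t \<in> {a..b} \<Longrightarrow> f t \<in> borel_measurable M"
    and cont: "\<And>\<omega>. \<omega> \<in> space M \<Longrightarrow> continuous_on {a..b} (\<lambda>t. f t \<omega>)"
  shows "(\<lambda>x. f (max a (min b (fst x))) (snd x)) \<in> borel_measurable ((lborel::real measure) \<Otimes>\<^sub>M M)"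
proof (rule borel_measurable_LIMSEQ_metric)
  define cl where "cl s = max a (min b s)" for s :: real
  have clin: "cl s \<in> {a..b}" for s using ab by (auto simp: cl_def)
  fix n :: nat
  show "(\<lambda>x. f (cl (real_of_int \<lceil>fst x * real (Suc n)\<rceil> / real (Suc n))) (snd x)) \<in> borel_measurable (lborel \<Otimes>\<^sub>M M)"
  proof (rule measurable_compose_countable'[where f="\<lambda>i (x::real \<times> 'a). f (cl (real_of_int i / real (Suc n))) (snd x)" and I=UNIV and g="\<lambda>x::real \<times> 'a. \<lceil>fst x * real (Suc n)\<rceil>"])
    fix i :: int
    show "(\<lambda>x. f (cl (real_of_int i / real (Suc n))) (snd x)) \<in> borel_measurable (lborel \<Otimes>\<^sub>M M)"
      by (rule measurable_compose[OF measurable_snd meas[OF clin]])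
  next
    show "(\<lambda>x. \<lceil>fst x * real (Suc n)\<rceil>) \<in> measurable (lborel \<Otimes>\<^sub>M M) (count_space UNIV)"
      by measurable
  qed simp
next
  fix x :: "real \<times> 'a" assume x: "x \<in> space (lborel \<Otimes>\<^sub>M M)"
  then have \<omega>: "snd x \<in> space M" by (auto simp: space_pair_measure)
  have "(\<lambda>n. max a (min b (real_of_int \<lceil>fst x * real (Suc n)\<rceil> / real (Suc n)))) \<longlonglongrightarrow> max a (min b (fst x))"
    by (intro tendsto_intros ceil_approx_tendsto)
  then show "(\<lambda>n. f (max a (min b (real_of_int \<lceil>fst x * real (Suc n)\<rceil> / real (Suc n)))) (snd x)) \<longlonglongrightarrow> f (max a (min b (fst x))) (snd x)"
    by (rule continuous_on_tendsto_compose[OF cont[OF \<omega>]]) (use ab in auto)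
qed

lemma nn_integral_mollif_shift:
  fixes \<theta> :: "real^'d \<Rightarrow> real"
  assumes th_meas[measurable]: "\<theta> \<in> borel_measurable borel" and th_nn: "\<And>x. 0 \<le> \<theta> x"
    and th_int: "(\<theta> has_integral 1) UNIV" and e: "0 < e"
  shows "(\<integral>\<^sup>+ x. ennreal (mollif e \<theta> (x + a)) \<partial>lborel) = 1"
proof -
  have m[measurable]: "(\<lambda>x. ennreal (mollif e \<theta> (x + a))) \<in> borel_measurable borel"
    unfolding mollif_def by measurable
  have "(\<integral>\<^sup>+ x. ennreal (mollif e \<theta> (x + a)) \<partial>lborel)
      = (\<integral>\<^sup>+ x. ennreal (mollif e \<theta> (x + a)) \<partial>(density (distr lborel borel (\<lambda>x. - a + e *\<^sub>R x)) (\<lambda>_. \<bar>e\<bar>^DIM(real^'d))))"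
    by (subst lborel_affine[OF e[THEN less_imp_neq, symmetric], of "-a", symmetric]) (rule refl)
  also have "\<dots> = (\<integral>\<^sup>+ x. ennreal (\<bar>e\<bar>^CARD('d)) * ennreal (mollif e \<theta> (- a + e *\<^sub>R x + a)) \<partial>lborel)"
    by (simp add: nn_integral_density nn_integral_distr)
  also have "\<dots> = (\<integral>\<^sup>+ x. ennreal (\<theta> x) \<partial>lborel)"
  proof (rule nn_integral_cong)
    fix x :: "real^'d"
    have "\<bar>e\<bar>^CARD('d) * mollif e \<theta> (- a + e *\<^sub>R x + a) = \<theta> x"
      using e by (simp add: mollif_def)
    then show "ennreal (\<bar>e\<bar>^CARD('d)) * ennreal (mollif e \<theta> (- a + e *\<^sub>R x + a)) = ennreal (\<theta> x)"
      by (subst ennreal_mult'[symmetric]) simp_all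
  qed
  also have "\<dots> = 1"
    using nn_integral_has_integral_lborel[OF th_meas th_nn th_int] by simp
  finally show ?thesis .
qed

lemma mollif_f0_bound:
  fixes \<theta> :: "real^'d \<Rightarrow> real" and f0 :: "(real^'d) \<times> (real^'d) \<Rightarrow> real"
  assumes th_meas[measurable]: "\<theta> \<in> borel_measurable borel" and th_nn: "\<And>x. 0 \<le> \<theta> x"
    and th_int: "(\<theta> has_integral 1) UNIV" and e: "0 < e"
    and f0_meas[measurable]: "f0 \<in> borel_measurable borel"
    and f0_bdd: "AE z in lborel. f0 z \<le> \<Gamma>"
    and f0_supp: "AE z in lborel. f0 z \<noteq> 0 \<longrightarrow> norm z \<le> R"
  shows "(\<integral>\<^sup>+ z. ennreal (f0 z) * ennreal (mollif e \<theta> (fst z + t *\<^sub>R snd z + c)) \<partial>lborel)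
     \<le> ennreal \<Gamma> * emeasure lborel (cball (0::real^'d) R)"
proof -
  have mm[measurable]: "mollif e \<theta> \<in> borel_measurable borel"
    unfolding mollif_def by measurable
  let ?F = "\<lambda>z::(real^'d) \<times> (real^'d). ennreal \<Gamma> * indicator (cball 0 R) (snd z) * ennreal (mollif e \<theta> (fst z + t *\<^sub>R snd z + c))"
  have "(\<integral>\<^sup>+ z. ennreal (f0 z) * ennreal (mollif e \<theta> (fst z + t *\<^sub>R snd z + c)) \<partial>lborel) \<le> (\<integral>\<^sup>+ z. ?F z \<partial>lborel)"
  proof (rule nn_integral_mono_AE)
    show "AE z in lborel. ennreal (f0 z) * ennreal (mollif e \<theta> (fst z + t *\<^sub>R snd z + c)) \<le> ?F z"
      using f0_bdd f0_supp
    proof eventually_elim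
      case (elim z)
      show ?case
      proof (cases "f0 z = 0")
        case True then show ?thesis by simp
      next
        case False
        then have "norm (snd z) \<le> R" using elim norm_snd_le[of "snd z" "fst z"] by auto
        then have "indicator (cball 0 R) (snd z) = (1::ennreal)" by (simp add: indicator_def)
        moreover have "ennreal (f0 z) \<le> ennreal \<Gamma>" using elim by (simp add: ennreal_leI)
        ultimately show ?thesis by (simp add: mult_right_mono)
      qed
    qed
  qed
  also have "(\<integral>\<^sup>+ z. ?F z \<partial>lborel) = (\<integral>\<^sup>+ z. ?F z \<partial>(lborel \<Otimes>\<^sub>M lborel))"
    by (simp add: lborel_prod)
  also have "\<dots> = (\<integral>\<^sup>+ v. (\<integral>\<^sup>+ x. ?F (x, v) \<partial>lborel) \<partial>lborel)"
  proof (rule pair_sigma_finite.nn_integral_snd[symmetric])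
    show "pair_sigma_finite lborel lborel" by unfold_locales
    have ci[measurable]: "(indicator (cball (0::real^'d) R) :: _ \<Rightarrow> ennreal) \<in> borel_measurable borel"
      by (rule borel_measurable_indicator) simp
    have "?F \<in> borel_measurable (borel \<Otimes>\<^sub>M borel)" by measurable
    then show "?F \<in> borel_measurable (lborel \<Otimes>\<^sub>M lborel)"
    proof -
      have "sets ((lborel::(real^'d) measure) \<Otimes>\<^sub>M (lborel::(real^'d) measure)) = sets ((borel::(real^'d) measure) \<Otimes>\<^sub>M (borel::(real^'d) measure))"
        by (intro sets_pair_measure_cong) simp_all
      then have "measurable ((lborel::(real^'d) measure) \<Otimes>\<^sub>M lborel) (borel :: ennreal measure) = measurable (borel \<Otimes>\<^sub>M borel) borel"
        by (intro measurable_cong_sets) simp_all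
      with \<open>?F \<in> borel_measurable (borel \<Otimes>\<^sub>M borel)\<close> show ?thesis by simp
    qed
  qed
  also have "\<dots> = (\<integral>\<^sup>+ (v::real^'d). ennreal \<Gamma> * indicator (cball 0 R) v \<partial>lborel)"
  proof (intro nn_integral_cong)
    fix v :: "real^'d"
    have "(\<integral>\<^sup>+ x. ?F (x, v) \<partial>lborel) = ennreal \<Gamma> * indicator (cball 0 R) v * (\<integral>\<^sup>+ x. ennreal (mollif e \<theta> (x + (t *\<^sub>R v + c))) \<partial>lborel)"
      by (subst nn_integral_cmult[symmetric]) (auto simp: add.assoc)
    also have "\<dots> = ennreal \<Gamma> * indicator (cball 0 R) v"
      using nn_integral_mollif_shift[OF th_meas th_nn th_int e] by simp
    finally show "(\<integral>\<^sup>+ x. ?F (x, v) \<partial>lborel) = ennreal \<Gamma> * indicator (cball 0 R) v" .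
  qed
  also have "\<dots> = ennreal \<Gamma> * emeasure lborel (cball (0::real^'d) R)"
    by (subst nn_integral_cmult) (auto intro: borel_measurable_indicator)
  finally show ?thesis .
qed

lemma distr_pair_indep:
  assumes M: "prob_space M" and X: "X \<in> measurable M MX" and Y: "Y \<in> measurable M MY"
    and ind: "\<And>A B. A \<in> sets MX \<Longrightarrow> B \<in> sets MY \<Longrightarrow>
       measure M ((X -` A \<inter> space M) \<inter> (Y -` B \<inter> space M)) = measure M (X -` A \<inter> space M) * measure M (Y -` B \<inter> space M)"
  shows "distr M MX X \<Otimes>\<^sub>M distr M MY Y = distr M (MX \<Otimes>\<^sub>M MY) (\<lambda>\<omega>. (X \<omega>, Y \<omega>))"
proof (rule pair_measure_eqI)
  interpret prob_space M by fact
  show "sigma_finite_measure (distr M MX X)"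
    using prob_space_distr[OF X] by (simp add: prob_space_imp_sigma_finite)
  show "sigma_finite_measure (distr M MY Y)"
    using prob_space_distr[OF Y] by (simp add: prob_space_imp_sigma_finite)
  show "sets (distr M MX X \<Otimes>\<^sub>M distr M MY Y) = sets (distr M (MX \<Otimes>\<^sub>M MY) (\<lambda>\<omega>. (X \<omega>, Y \<omega>)))"
    by simp
  fix A B assume A: "A \<in> sets (distr M MX X)" and B: "B \<in> sets (distr M MY Y)"
  then have A': "A \<in> sets MX" and B': "B \<in> sets MY" by auto
  have XY: "(\<lambda>\<omega>. (X \<omega>, Y \<omega>)) \<in> measurable M (MX \<Otimes>\<^sub>M MY)" using X Y by measurable
  have eq: "(\<lambda>\<omega>. (X \<omega>, Y \<omega>)) -` (A \<times> B) \<inter> space M = (X -` A \<inter> space M) \<inter> (Y -` B \<inter> space M)" by auto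
  have evA: "X -` A \<inter> space M \<in> events" using X A' by measurable
  have evB: "Y -` B \<inter> space M \<in> events" using Y B' by measurable
  have i2: "prob (X -` A \<inter> space M \<inter> Y -` B \<inter> space M) = prob (X -` A \<inter> space M) * prob (Y -` B \<inter> space M)"
    using ind[OF A' B'] by (metis Int_assoc)
  show "emeasure (distr M MX X) A * emeasure (distr M MY Y) B = emeasure (distr M (MX \<Otimes>\<^sub>M MY) (\<lambda>\<omega>. (X \<omega>, Y \<omega>))) (A \<times> B)"
    using A' B' X Y XY evA evB
    by (simp add: emeasure_distr eq emeasure_eq_measure ind[OF A' B'] ennreal_mult[symmetric])
qed

definition Ipath :: "real \<Rightarrow> (real \<Rightarrow> 'b::real_normed_vector) \<Rightarrow> 'b" where
  "Ipath t p = lim (\<lambda>n. \<Sum>k<n. (t / real n) *\<^sub>R p (real k * t / real n))"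

lemma Ipath_meas[measurable]:
  "(Ipath t :: (real \<Rightarrow> 'b::{banach,second_countable_topology}) \<Rightarrow> 'b) \<in> borel_measurable (Pi\<^sub>M UNIV (\<lambda>_. borel))"
  unfolding Ipath_def by measurable

lemma Ipath_eq:
  assumes "continuous_on {0..t} (p :: real \<Rightarrow> 'b::banach)" "0 \<le> t"
  shows "Ipath t p = integral {0..t} p"
  unfolding Ipath_def by (rule limI[OF riemann_sum_tendsto[OF assms]])

lemma pos_eq:
  assumes c: "continuous_on {0..} (\<lambda>s. B i s \<omega>)" and t: "0 \<le> t"
  shows "pos X0 B i t \<omega> = fst (X0 i \<omega>) + t *\<^sub>R snd (X0 i \<omega>) + Ipath t (\<lambda>s. B i s \<omega>)"
proof -
  have c': "continuous_on {0..t} (\<lambda>s. B i s \<omega>)" by (rule continuous_on_subset[OF c]) auto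
  have "integral {0..t} (\<lambda>s. vel X0 B i s \<omega>) = integral {0..t} (\<lambda>s. snd (X0 i \<omega>)) + integral {0..t} (\<lambda>s. B i s \<omega>)"
    unfolding vel_def by (rule integral_add) (use c' integrable_continuous_interval in auto)
  also have "\<dots> = t *\<^sub>R snd (X0 i \<omega>) + Ipath t (\<lambda>s. B i s \<omega>)"
    using t by (simp add: Ipath_eq[OF c' t])
  finally show ?thesis by (simp add: pos_def add.assoc)
qed

lemma pos_cont:
  assumes c: "continuous_on {0..} (\<lambda>s. B i s \<omega>)"
  shows "continuous_on {0..T} (\<lambda>t. pos X0 B i t \<omega>)"
proof -
  have c': "continuous_on {0..T} (\<lambda>s. vel X0 B i s \<omega>)" unfolding vel_def
    by (intro continuous_intros continuous_on_subset[OF c]) auto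
  show ?thesis unfolding pos_def
    by (intro continuous_intros indefinite_integral_continuous_1 integrable_continuous_interval c')
qed

lemma vel_cont:
  assumes c: "continuous_on {0..} (\<lambda>s. B i s \<omega>)"
  shows "continuous_on {0..T} (\<lambda>t. vel X0 B i t \<omega>)"
  unfolding vel_def by (intro continuous_intros continuous_on_subset[OF c]) auto

lemma key_bound:
  fixes \<theta> :: "real^'d \<Rightarrow> real" and f0 :: "(real^'d) \<times> (real^'d) \<Rightarrow> real"
    and X0 :: "nat \<Rightarrow> 'a \<Rightarrow> (real^'d) \<times> (real^'d)" and B :: "nat \<Rightarrow> real \<Rightarrow> 'a \<Rightarrow> real^'d"
    and g :: "real^'d \<Rightarrow> real"
  assumes M: "prob_space M"
    and th_meas[measurable]: "\<theta> \<in> borel_measurable borel" and th_nn: "\<And>x. 0 \<le> \<theta> x"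
    and th_int: "(\<theta> has_integral 1) UNIV" and e: "0 < e"
    and f0_meas[measurable]: "f0 \<in> borel_measurable borel"
    and f0_bdd: "AE z in lborel. f0 z \<le> \<Gamma>"
    and f0_supp: "AE z in lborel. f0 z \<noteq> 0 \<longrightarrow> norm z \<le> R"
    and Xi_distr: "distributed M lborel (X0 i) (\<lambda>z. ennreal (f0 z))"
    and indi: "indep_rv M borel (X0 i) (Pi\<^sub>M UNIV (\<lambda>_::real. borel)) (\<lambda>\<omega> t. B i t \<omega>)"
    and Yi_meas[measurable]: "(\<lambda>\<omega>. (X0 i \<omega>, \<lambda>t. B i t \<omega>)) \<in> measurable M (borel \<Otimes>\<^sub>M Pi\<^sub>M UNIV (\<lambda>_::real. borel))"
    and Yj_meas[measurable]: "(\<lambda>\<omega>. (X0 j \<omega>, \<lambda>t. B j t \<omega>)) \<in> measurable M (borel \<Otimes>\<^sub>M Pi\<^sub>M UNIV (\<lambda>_::real. borel))"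
    and indij: "\<And>A C. A \<in> sets (borel \<Otimes>\<^sub>M Pi\<^sub>M UNIV (\<lambda>_::real. borel)) \<Longrightarrow> C \<in> sets (borel \<Otimes>\<^sub>M Pi\<^sub>M UNIV (\<lambda>_::real. borel)) \<Longrightarrow>
        measure M (((\<lambda>\<omega>. (X0 i \<omega>, \<lambda>t. B i t \<omega>)) -` A \<inter> space M) \<inter> ((\<lambda>\<omega>. (X0 j \<omega>, \<lambda>t. B j t \<omega>)) -` C \<inter> space M))
        = measure M ((\<lambda>\<omega>. (X0 i \<omega>, \<lambda>t. B i t \<omega>)) -` A \<inter> space M) * measure M ((\<lambda>\<omega>. (X0 j \<omega>, \<lambda>t. B j t \<omega>)) -` C \<inter> space M)"
    and conti: "\<And>\<omega>. \<omega> \<in> space M \<Longrightarrow> continuous_on {0..} (\<lambda>s. B i s \<omega>)"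
    and contj: "\<And>\<omega>. \<omega> \<in> space M \<Longrightarrow> continuous_on {0..} (\<lambda>s. B j s \<omega>)"
    and g_meas[measurable]: "g \<in> borel_measurable borel" and g_nn: "\<And>v. 0 \<le> g v"
    and t: "0 \<le> t"
  shows "(\<integral>\<^sup>+ \<omega>. ennreal (mollif e \<theta> (pos X0 B i t \<omega> - pos X0 B j t \<omega>) * g (vel X0 B j t \<omega>)) \<partial>M)
     \<le> ennreal \<Gamma> * emeasure lborel (cball (0::real^'d) R) * (\<integral>\<^sup>+ \<omega>. ennreal (g (vel X0 B j t \<omega>)) \<partial>M)"
proof -
  interpret prob_space M by fact
  let ?PM = "Pi\<^sub>M UNIV (\<lambda>_::real. borel) :: (real \<Rightarrow> real^'d) measure"
  let ?MY = "borel \<Otimes>\<^sub>M ?PM"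
  define Yi where "Yi \<omega> = (X0 i \<omega>, \<lambda>t. B i t \<omega>)" for \<omega>
  define Yj where "Yj \<omega> = (X0 j \<omega>, \<lambda>t. B j t \<omega>)" for \<omega>
  have Yi_m[measurable]: "Yi \<in> measurable M ?MY" using Yi_meas unfolding Yi_def .
  have Yj_m[measurable]: "Yj \<in> measurable M ?MY" using Yj_meas unfolding Yj_def .
  define posF :: "((real^'d) \<times> (real^'d)) \<times> (real \<Rightarrow> real^'d) \<Rightarrow> real^'d"
    where "posF y = fst (fst y) + t *\<^sub>R snd (fst y) + Ipath t (snd y)" for y
  define velF :: "((real^'d) \<times> (real^'d)) \<times> (real \<Rightarrow> real^'d) \<Rightarrow> real^'d"
    where "velF y = snd (fst y) + snd y t" for y
  have fst_m[measurable]: "(fst :: (real^'d) \<times> (real^'d) \<Rightarrow> real^'d) \<in> borel_measurable borel"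
    by (intro borel_measurable_continuous_onI continuous_intros)
  have snd_m[measurable]: "(snd :: (real^'d) \<times> (real^'d) \<Rightarrow> real^'d) \<in> borel_measurable borel"
    by (intro borel_measurable_continuous_onI continuous_intros)
  have posF_m[measurable]: "posF \<in> borel_measurable ?MY" unfolding posF_def by measurable
  have velF_m[measurable]: "velF \<in> borel_measurable ?MY" unfolding velF_def by measurable
  have mm[measurable]: "mollif e \<theta> \<in> borel_measurable borel"
    unfolding mollif_def by measurable
  have mol_nn: "0 \<le> mollif e \<theta> x" for x using th_nn e by (simp add: mollif_def)
  define H where "H y = ennreal (mollif e \<theta> (posF (fst y) - posF (snd y)) * g (velF (snd y)))" for y
  have H_m[measurable]: "H \<in> borel_measurable (?MY \<Otimes>\<^sub>M ?MY)" unfolding H_def by measurable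
  define Pi where "Pi = distr M ?MY Yi"
  define Pj where "Pj = distr M ?MY Yj"
  interpret Pi: prob_space Pi unfolding Pi_def by (rule prob_space_distr) simp
  interpret Pj: prob_space Pj unfolding Pj_def by (rule prob_space_distr) simp
  interpret PP: pair_sigma_finite Pi Pj by unfold_locales
  have pathi_m[measurable]: "(\<lambda>\<omega> t. B i t \<omega>) \<in> measurable M ?PM"
    using measurable_snd'[OF Yi_meas] by simp
  have X0i_m[measurable]: "X0 i \<in> measurable M borel"
    using measurable_fst'[OF Yi_meas] by simp
  define Q where "Q = distr M ?PM (\<lambda>\<omega> t. B i t \<omega>)"
  interpret Q: prob_space Q unfolding Q_def by (rule prob_space_distr) simp
  have F0: "distr M borel (X0 i) = density lborel (\<lambda>z. ennreal (f0 z))"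
  proof -
    have "distr M lborel (X0 i) = density lborel (\<lambda>z. ennreal (f0 z))"
      using Xi_distr unfolding distributed_def by simp
    moreover have "distr M borel (X0 i) = distr M lborel (X0 i)"
      by (rule measure_eqI) (auto simp: emeasure_distr)
    ultimately show ?thesis by simp
  qed
  interpret F0: sigma_finite_measure "distr M borel (X0 i)"
    by (rule prob_space_imp_sigma_finite, rule prob_space_distr) simp
  interpret FQ: pair_sigma_finite "distr M borel (X0 i)" Q by unfold_locales
  have Pi_eq: "Pi = distr M borel (X0 i) \<Otimes>\<^sub>M Q"
    unfolding Pi_def Q_def Yi_def
  proof (rule distr_pair_indep[symmetric, OF M X0i_m pathi_m])
    fix A :: "((real^'d) \<times> (real^'d)) set" and C :: "(real \<Rightarrow> real^'d) set"
    assume "A \<in> sets borel" "C \<in> sets ?PM"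
    then show "measure M ((X0 i -` A \<inter> space M) \<inter> ((\<lambda>\<omega> t. B i t \<omega>) -` C \<inter> space M)) =
      measure M (X0 i -` A \<inter> space M) * measure M ((\<lambda>\<omega> t. B i t \<omega>) -` C \<inter> space M)"
      using indi unfolding indep_rv_def by (intro indep_setD) auto
  qed
  have inner: "(\<integral>\<^sup>+ y. ennreal (mollif e \<theta> (posF y - c)) \<partial>Pi) \<le> ennreal \<Gamma> * emeasure lborel (cball (0::real^'d) R)" for c
  proof -
    have "(\<integral>\<^sup>+ y. ennreal (mollif e \<theta> (posF y - c)) \<partial>Pi)
        = (\<integral>\<^sup>+ p. (\<integral>\<^sup>+ z. ennreal (mollif e \<theta> (posF (z, p) - c)) \<partial>distr M borel (X0 i)) \<partial>Q)"
      unfolding Pi_eq by (rule FQ.nn_integral_snd[symmetric]) (use Pi_eq in \<open>simp add: Pi_def Q_def\<close>)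
    also have "\<dots> \<le> (\<integral>\<^sup>+ p. ennreal \<Gamma> * emeasure lborel (cball (0::real^'d) R) \<partial>Q)"
    proof (rule nn_integral_mono)
      fix p :: "real \<Rightarrow> real^'d"
      have "(\<integral>\<^sup>+ z. ennreal (mollif e \<theta> (posF (z, p) - c)) \<partial>distr M borel (X0 i))
          = (\<integral>\<^sup>+ z. ennreal (f0 z) * ennreal (mollif e \<theta> (fst z + t *\<^sub>R snd z + (Ipath t p - c))) \<partial>lborel)"
        unfolding F0 by (subst nn_integral_density) (auto simp: posF_def algebra_simps)
      also have "\<dots> \<le> ennreal \<Gamma> * emeasure lborel (cball (0::real^'d) R)"
        by (rule mollif_f0_bound[OF th_meas th_nn th_int e f0_meas f0_bdd f0_supp])
      finally show "(\<integral>\<^sup>+ z. ennreal (mollif e \<theta> (posF (z, p) - c)) \<partial>distr M borel (X0 i)) \<le> ennreal \<Gamma> * emeasure lborel (cball (0::real^'d) R)" .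
    qed
    also have "\<dots> = ennreal \<Gamma> * emeasure lborel (cball (0::real^'d) R)"
      by (simp add: Q.emeasure_space_1)
    finally show ?thesis .
  qed
  have "(\<integral>\<^sup>+ \<omega>. ennreal (mollif e \<theta> (pos X0 B i t \<omega> - pos X0 B j t \<omega>) * g (vel X0 B j t \<omega>)) \<partial>M)
      = (\<integral>\<^sup>+ \<omega>. H (Yi \<omega>, Yj \<omega>) \<partial>M)"
  proof (rule nn_integral_cong)
    fix \<omega> assume w: "\<omega> \<in> space M"
    show "ennreal (mollif e \<theta> (pos X0 B i t \<omega> - pos X0 B j t \<omega>) * g (vel X0 B j t \<omega>)) = H (Yi \<omega>, Yj \<omega>)"
      using pos_eq[of B i \<omega> t X0, OF conti[OF w] t] pos_eq[of B j \<omega> t X0, OF contj[OF w] t]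
      by (simp add: H_def posF_def velF_def Yi_def Yj_def vel_def)
  qed
  also have "\<dots> = (\<integral>\<^sup>+ y. H y \<partial>distr M (?MY \<Otimes>\<^sub>M ?MY) (\<lambda>\<omega>. (Yi \<omega>, Yj \<omega>)))"
    by (rule nn_integral_distr[symmetric]) simp_all
  also have "distr M (?MY \<Otimes>\<^sub>M ?MY) (\<lambda>\<omega>. (Yi \<omega>, Yj \<omega>)) = Pi \<Otimes>\<^sub>M Pj"
    unfolding Pi_def Pj_def
    by (rule distr_pair_indep[symmetric, OF M Yi_m Yj_m]) (unfold Yi_def Yj_def, rule indij)
  also have "(\<integral>\<^sup>+ y. H y \<partial>(Pi \<Otimes>\<^sub>M Pj)) = (\<integral>\<^sup>+ yj. (\<integral>\<^sup>+ yi. H (yi, yj) \<partial>Pi) \<partial>Pj)"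
    by (rule PP.nn_integral_snd[symmetric]) (simp add: Pi_def Pj_def)
  also have "\<dots> \<le> (\<integral>\<^sup>+ yj. ennreal \<Gamma> * emeasure lborel (cball (0::real^'d) R) * ennreal (g (velF yj)) \<partial>Pj)"
  proof (rule nn_integral_mono)
    fix yj
    have "(\<integral>\<^sup>+ yi. H (yi, yj) \<partial>Pi) = (\<integral>\<^sup>+ yi. ennreal (mollif e \<theta> (posF yi - posF yj)) * ennreal (g (velF yj)) \<partial>Pi)"
      unfolding H_def by (intro nn_integral_cong) (simp add: ennreal_mult' mol_nn)
    also have "\<dots> = (\<integral>\<^sup>+ yi. ennreal (mollif e \<theta> (posF yi - posF yj)) \<partial>Pi) * ennreal (g (velF yj))"
      by (rule nn_integral_multc) (simp add: Pi_def)
    also have "\<dots> \<le> ennreal \<Gamma> * emeasure lborel (cball (0::real^'d) R) * ennreal (g (velF yj))"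
      by (rule mult_right_mono[OF inner]) simp
    finally show "(\<integral>\<^sup>+ yi. H (yi, yj) \<partial>Pi) \<le> ennreal \<Gamma> * emeasure lborel (cball (0::real^'d) R) * ennreal (g (velF yj))" .
  qed
  also have "\<dots> = ennreal \<Gamma> * emeasure lborel (cball (0::real^'d) R) * (\<integral>\<^sup>+ yj. ennreal (g (velF yj)) \<partial>Pj)"
    by (rule nn_integral_cmult) (simp add: Pj_def)
  also have "(\<integral>\<^sup>+ yj. ennreal (g (velF yj)) \<partial>Pj) = (\<integral>\<^sup>+ \<omega>. ennreal (g (vel X0 B j t \<omega>)) \<partial>M)"
    unfolding Pj_def by (subst nn_integral_distr) (simp_all add: velF_def Yj_def vel_def)
  finally show ?thesis .
qed

lemma vel_tail:
  fixes X0 :: "nat \<Rightarrow> 'a \<Rightarrow> (real^'d) \<times> (real^'d)" and B :: "nat \<Rightarrow> real \<Rightarrow> 'a \<Rightarrow> real^'d"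
    and f0 :: "(real^'d) \<times> (real^'d) \<Rightarrow> real" and ps :: "real^'d \<Rightarrow> real"
  assumes M: "prob_space M"
    and X0j: "distributed M lborel (X0 j) (\<lambda>z. ennreal (f0 z))"
    and f0_supp: "AE z in lborel. f0 z \<noteq> 0 \<longrightarrow> norm z \<le> R"
    and BM: "std_BM M (B j)"
    and ps_meas[measurable]: "ps \<in> borel_measurable borel"
    and ps_range: "\<And>v. 0 \<le> ps v \<and> ps v \<le> 1" and ps_one: "\<And>v. v \<in> ball 0 L \<Longrightarrow> ps v = 1"
    and RL: "R < L" and t: "0 \<le> t"
  shows "(\<integral>\<^sup>+\<omega>. ennreal (1 - ps (vel X0 B j t \<omega>)) \<partial>M)
     \<le> (\<integral>\<^sup>+(x::real^'d). indicator {x. L - R \<le> norm x} x * ennreal (gauss_density t x) \<partial>lborel)"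
proof -
  interpret prob_space M by fact
  have X0m[measurable]: "X0 j \<in> measurable M borel"
    using distributed_measurable[OF X0j] by simp
  have Bm[measurable]: "B j s \<in> borel_measurable M" for s using BM unfolding std_BM_def by blast
  have B0: "\<And>\<omega>. \<omega> \<in> space M \<Longrightarrow> B j 0 \<omega> = 0" using BM unfolding std_BM_def by blast
  have snd_m[measurable]: "(snd :: (real^'d) \<times> (real^'d) \<Rightarrow> real^'d) \<in> borel_measurable borel"
    by (intro borel_measurable_continuous_onI continuous_intros)
  define S1 where "S1 = {z :: (real^'d) \<times> (real^'d). R < norm (snd z)}"
  define S2 where "S2 = {x :: real^'d. L - R \<le> norm x}"
  have S1m[measurable]: "S1 \<in> sets borel" unfolding S1_def by measurable
  have S2m[measurable]: "S2 \<in> sets borel" unfolding S2_def by measurable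
  have "(\<integral>\<^sup>+\<omega>. ennreal (1 - ps (vel X0 B j t \<omega>)) \<partial>M)
      \<le> (\<integral>\<^sup>+\<omega>. indicator S1 (X0 j \<omega>) + indicator S2 (B j t \<omega>) \<partial>M)"
  proof (rule nn_integral_mono)
    fix \<omega>
    show "ennreal (1 - ps (vel X0 B j t \<omega>)) \<le> indicator S1 (X0 j \<omega>) + indicator S2 (B j t \<omega>)"
    proof (cases "norm (vel X0 B j t \<omega>) < L")
      case True
      then have "ps (vel X0 B j t \<omega>) = 1" by (intro ps_one) simp
      then show ?thesis by simp
    next
      case False
      then have "L \<le> norm (snd (X0 j \<omega>) + B j t \<omega>)" by (simp add: vel_def)
      also have "\<dots> \<le> norm (snd (X0 j \<omega>)) + norm (B j t \<omega>)" by (rule norm_triangle_ineq)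
      finally have "X0 j \<omega> \<in> S1 \<or> B j t \<omega> \<in> S2" unfolding S1_def S2_def by auto
      moreover have le1: "ennreal (1 - ps (vel X0 B j t \<omega>)) \<le> 1" using ps_range by simp
      moreover have "(1::ennreal) \<le> 2" by simp
      ultimately show ?thesis by (auto simp: indicator_def intro: order_trans[OF le1])
    qed
  qed
  also have "\<dots> = (\<integral>\<^sup>+\<omega>. indicator S1 (X0 j \<omega>) \<partial>M) + (\<integral>\<^sup>+\<omega>. indicator S2 (B j t \<omega>) \<partial>M)"
    by (rule nn_integral_add) simp_all
  also have "(\<integral>\<^sup>+\<omega>. indicator S1 (X0 j \<omega>) \<partial>M) = 0"
  proof -
    have "(\<integral>\<^sup>+\<omega>. indicator S1 (X0 j \<omega>) \<partial>M) = (\<integral>\<^sup>+z. ennreal (f0 z) * indicator S1 z \<partial>lborel)"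
      by (rule distributed_nn_integral[OF X0j, symmetric]) simp
    also have "\<dots> = (\<integral>\<^sup>+(z::(real^'d) \<times> (real^'d)). 0 \<partial>lborel)"
    proof (rule nn_integral_cong_AE)
      show "AE z in lborel. ennreal (f0 z) * indicator S1 z = 0"
        using f0_supp
      proof eventually_elim
        case (elim z)
        have "norm (snd z) \<le> norm z" using norm_snd_le[of "snd z" "fst z"] by simp
        then show ?case using elim by (auto simp: S1_def indicator_def)
      qed
    qed
    finally show ?thesis by simp
  qed
  also have "(\<integral>\<^sup>+\<omega>. indicator S2 (B j t \<omega>) \<partial>M) \<le> (\<integral>\<^sup>+x. indicator S2 x * ennreal (gauss_density t x) \<partial>lborel)"
  proof (cases "t = 0")
    case True
    have "(\<integral>\<^sup>+\<omega>. indicator S2 (B j t \<omega>) \<partial>M) = (\<integral>\<^sup>+\<omega>. 0 \<partial>M)"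
      by (rule nn_integral_cong) (use True B0 RL in \<open>auto simp: S2_def indicator_def\<close>)
    then show ?thesis by simp
  next
    case False
    with t have tpos: "0 < t" by simp
    have D: "distributed M lborel (\<lambda>\<omega>. B j t \<omega> - B j 0 \<omega>) (\<lambda>x. ennreal (gauss_density (t - 0) x))"
      using BM tpos unfolding std_BM_def by blast
    have "(\<integral>\<^sup>+\<omega>. indicator S2 (B j t \<omega>) \<partial>M) = (\<integral>\<^sup>+\<omega>. indicator S2 (B j t \<omega> - B j 0 \<omega>) \<partial>M)"
      by (rule nn_integral_cong) (simp add: B0)
    also have "\<dots> = (\<integral>\<^sup>+x. ennreal (gauss_density t x) * indicator S2 x \<partial>lborel)"
      using distributed_nn_integral[OF D, of "indicator S2"] by simp
    finally show ?thesis by (simp add: mult.commute)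
  qed
  finally show ?thesis by (simp add: S2_def)
qed

lemma INF_zero_ennreal:
  fixes f :: "nat \<Rightarrow> ennreal" and N :: nat
  assumes "\<And>n. n \<ge> N \<Longrightarrow> f n = 0" shows "(INF n. f n) = 0"
proof -
  have "(INF n. f n) \<le> f N" by (rule INF_lower) simp
  also have "f N = 0" using assms by simp
  finally show ?thesis by simp
qed

lemma gauss_tail_meas:
  "(\<lambda>t. \<integral>\<^sup>+(x::real^'d). indicator {x. a \<le> norm x} x * ennreal (gauss_density t x) \<partial>lborel) \<in> borel_measurable lborel"
proof -
  have hm: "(\<lambda>(t, x::real^'d). indicator {x. a \<le> norm x} x * ennreal (gauss_density t x)) \<in> borel_measurable (lborel \<Otimes>\<^sub>M lborel)"
  proof -
    have "(\<lambda>(t, x::real^'d). indicator {x. a \<le> norm x} x * ennreal (gauss_density t x)) \<in> borel_measurable (borel \<Otimes>\<^sub>M borel)"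
      unfolding gauss_density_def by measurable
    moreover have "sets ((lborel::real measure) \<Otimes>\<^sub>M (lborel::(real^'d) measure)) = sets ((borel::real measure) \<Otimes>\<^sub>M (borel::(real^'d) measure))"
      by (intro sets_pair_measure_cong) simp_all
    then have "measurable ((lborel::real measure) \<Otimes>\<^sub>M (lborel::(real^'d) measure)) (borel :: ennreal measure) = measurable (borel \<Otimes>\<^sub>M borel) borel"
      by (intro measurable_cong_sets) simp_all
    ultimately show ?thesis by simp
  qed
  show ?thesis
    by (rule sigma_finite_measure.borel_measurable_nn_integral[OF _ hm]) unfold_locales
qed

lemma tail_lim:
  fixes R T :: real
  assumes tot: "\<And>t. 0 < t \<Longrightarrow> (\<integral>\<^sup>+(x::real^'d). ennreal (gauss_density t x) \<partial>lborel) = 1"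
  shows "(\<lambda>n::nat. \<integral>\<^sup>+t\<in>{0..T}. (\<integral>\<^sup>+(x::real^'d). indicator {x. real n - R \<le> norm x} x * ennreal (gauss_density t x) \<partial>lborel) \<partial>lborel) \<longlonglongrightarrow> 0"
proof -
  define h :: "nat \<Rightarrow> real \<Rightarrow> real^'d \<Rightarrow> ennreal"
    where "h n t x = indicator {x. real n - R \<le> norm x} x * ennreal (gauss_density t x)" for n t x
  define G where "G n t = (\<integral>\<^sup>+x. h n t x \<partial>lborel) * indicator {0..T} t" for n t
  have hm: "(\<lambda>(t, x). h n t x) \<in> borel_measurable (lborel \<Otimes>\<^sub>M lborel)" for n
  proof -
    have "(\<lambda>(t, x). h n t x) \<in> borel_measurable (borel \<Otimes>\<^sub>M borel)"
      unfolding h_def gauss_density_def by measurable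
    moreover have "sets ((lborel::real measure) \<Otimes>\<^sub>M (lborel::(real^'d) measure)) = sets ((borel::real measure) \<Otimes>\<^sub>M (borel::(real^'d) measure))"
      by (intro sets_pair_measure_cong) simp_all
    then have "measurable ((lborel::real measure) \<Otimes>\<^sub>M (lborel::(real^'d) measure)) (borel :: ennreal measure) = measurable (borel \<Otimes>\<^sub>M borel) borel"
      by (intro measurable_cong_sets) simp_all
    ultimately show ?thesis by simp
  qed
  have Gm[measurable]: "G n \<in> borel_measurable lborel" for n
  proof -
    have "(\<lambda>t. \<integral>\<^sup>+x. h n t x \<partial>lborel) \<in> borel_measurable lborel"
      by (rule sigma_finite_measure.borel_measurable_nn_integral[OF _ hm]) unfold_locales
    then show ?thesis unfolding G_def by measurable
  qed
  have h_mono: "h (Suc n) t x \<le> h n t x" for n t x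
    unfolding h_def by (intro mult_right_mono) (auto simp: indicator_def)
  have G_suc: "G (Suc n) t \<le> G n t" for n t
    by (auto simp: G_def intro!: mult_right_mono nn_integral_mono h_mono)
  have G_mono: "decseq G"
    by (rule decseq_SucI, rule le_funI, rule G_suc)
  have hint_le: "(\<integral>\<^sup>+x. h n t x \<partial>lborel) \<le> 1" if "0 < t" for n t
  proof -
    have "(\<integral>\<^sup>+x. h n t x \<partial>lborel) \<le> (\<integral>\<^sup>+(x::real^'d). ennreal (gauss_density t x) \<partial>lborel)"
      unfolding h_def by (intro nn_integral_mono) (auto simp: indicator_def)
    then show ?thesis using tot[OF that] by simp
  qed
  have h0: "h n 0 x = 0" for n x by (simp add: h_def gauss_density_def)
  have h0': "(\<lambda>x. h n 0 x) = (\<lambda>x. 0)" for n by (simp add: h0)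
  have G_le: "G n t \<le> indicator {0..T} t" for n t
  proof (cases "t \<in> {0..T}")
    case True
    show ?thesis
    proof (cases "t = 0")
      case True then show ?thesis by (simp add: G_def h0)
    next
      case False
      with \<open>t \<in> {0..T}\<close> have "0 < t" by auto
      then show ?thesis using hint_le[of t n] True by (simp add: G_def)
    qed
  qed (simp add: G_def)
  have fin: "(\<integral>\<^sup>+t. G 0 t \<partial>lborel) < \<infinity>"
  proof -
    have "(\<integral>\<^sup>+t. G 0 t \<partial>lborel) \<le> (\<integral>\<^sup>+t. indicator {0..T} t \<partial>lborel)"
      by (intro nn_integral_mono G_le)
    also have "\<dots> < \<infinity>" by (simp add: emeasure_lborel_Icc_eq)
    finally show ?thesis .
  qed
  have INF0: "(INF n. G n t) = 0" for t
  proof (cases "t \<in> {0..T} \<and> 0 < t")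
    case False
    then have "t \<notin> {0..T} \<or> t = 0" by auto
    then show ?thesis
      by (intro INF_zero_ennreal[of 0]) (auto simp: G_def h0')
  next
    case True
    have "(INF n. \<integral>\<^sup>+x. h n t x \<partial>lborel) = (\<integral>\<^sup>+x. (INF n. h n t x) \<partial>lborel)"
    proof (rule nn_integral_monotone_convergence_INF_decseq[symmetric])
      show "decseq (\<lambda>n x. h n t x)" by (rule decseq_SucI, rule le_funI, rule h_mono)
      fix n
      show "(\<lambda>x. h n t x) \<in> borel_measurable lborel"
        unfolding h_def gauss_density_def by measurable
      show "(\<integral>\<^sup>+x. h n t x \<partial>lborel) < \<infinity>"
        using hint_le[of t n] True by (auto intro: le_less_trans[OF _ ennreal_one_less_top])
    qed
    also have "\<dots> = (\<integral>\<^sup>+x. 0 \<partial>(lborel :: (real^'d) measure))"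
    proof (rule nn_integral_cong)
      fix x :: "real^'d"
      obtain N :: nat where N: "norm x + R < real N" using reals_Archimedean2 by blast
      show "(INF n. h n t x) = 0"
        by (rule INF_zero_ennreal[of N]) (use N in \<open>auto simp: h_def indicator_def\<close>)
    qed
    finally show ?thesis using True by (simp add: G_def)
  qed
  have "(\<lambda>n. \<integral>\<^sup>+t. G n t \<partial>lborel) \<longlonglongrightarrow> (INF n. \<integral>\<^sup>+t. G n t \<partial>lborel)"
    by (rule LIMSEQ_INF, rule decseq_SucI, rule nn_integral_mono) (rule G_suc)
  also have "(INF n. \<integral>\<^sup>+t. G n t \<partial>lborel) = (\<integral>\<^sup>+t. (INF n. G n t) \<partial>lborel)"
    by (rule nn_integral_monotone_convergence_INF_decseq[symmetric, OF G_mono Gm fin])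
  also have "\<dots> = 0" by (simp add: INF0)
  finally show ?thesis by (simp add: G_def h_def mult.commute)
qed

lemma std_BM_D:
  assumes "std_BM M B"
  shows std_BM_meas: "\<And>t. B t \<in> borel_measurable M"
    and std_BM_0: "\<And>\<omega>. \<omega> \<in> space M \<Longrightarrow> B 0 \<omega> = 0"
    and std_BM_cont: "\<And>\<omega>. \<omega> \<in> space M \<Longrightarrow> continuous_on {0..} (\<lambda>t. B t \<omega>)"
    and std_BM_distr: "\<And>s t. 0 \<le> s \<Longrightarrow> s < t \<Longrightarrow> distributed M lborel (\<lambda>\<omega>. B t \<omega> - B s \<omega>) (\<lambda>x. ennreal (gauss_density (t - s) x))"
proof -
  note hh = assms[unfolded std_BM_def]
  have h1: "\<forall>t. B t \<in> borel_measurable M" by (rule conjunct1[OF hh])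
  have h2: "\<forall>\<omega>\<in>space M. B 0 \<omega> = 0 \<and> continuous_on {0..} (\<lambda>t. B t \<omega>)"
    by (rule conjunct1[OF conjunct2[OF hh]])
  have h3: "\<forall>s t. 0 \<le> s \<and> s < t \<longrightarrow>
        distributed M lborel (\<lambda>\<omega>. B t \<omega> - B s \<omega>) (\<lambda>x. ennreal (gauss_density (t - s) x))"
    by (rule conjunct1[OF conjunct2[OF conjunct2[OF hh]]])
  show "\<And>t. B t \<in> borel_measurable M" using h1 by blast
  show "\<And>\<omega>. \<omega> \<in> space M \<Longrightarrow> B 0 \<omega> = 0" using h2 by blast
  show "\<And>\<omega>. \<omega> \<in> space M \<Longrightarrow> continuous_on {0..} (\<lambda>t. B t \<omega>)" using h2 by blast
  show "\<And>s t. 0 \<le> s \<Longrightarrow> s < t \<Longrightarrow> distributed M lborel (\<lambda>\<omega>. B t \<omega> - B s \<omega>) (\<lambda>x. ennreal (gauss_density (t - s) x))"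
    using h3 by blast
qed

lemma C_inf_cont: "C_inf f \<Longrightarrow> continuous_on UNIV f"
  by (erule C_inf.cases) simp

lemma C_c_inf_bounded:
  assumes "C_c_inf (f :: 'a::real_normed_vector \<Rightarrow> 'b::real_normed_vector)"
  shows "\<exists>K\<ge>0. \<forall>x. norm (f x) \<le> K"
proof -
  define S where "S = closure {x. f x \<noteq> 0}"
  have cS: "compact S" using assms unfolding C_c_inf_def S_def by (rule conjunct2)
  have "C_inf f" using assms unfolding C_c_inf_def by (rule conjunct1)
  then have cont: "continuous_on UNIV f" by (rule C_inf_cont)
  have "continuous_on S f" by (rule continuous_on_subset[OF cont]) (rule subset_UNIV)
  then have "compact (f ` S)" by (rule compact_continuous_image[OF _ cS])
  then have "bounded (f ` S)" by (rule compact_imp_bounded)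
  then obtain K where K: "\<forall>y\<in>f ` S. norm y \<le> K" unfolding bounded_iff by blast
  have "norm (f x) \<le> max K 0" for x
  proof (cases "x \<in> S")
    case True
    then have "f x \<in> f ` S" by (rule imageI)
    then have "norm (f x) \<le> K" using K by blast
    then show ?thesis by simp
  next
    case False
    have "{x. f x \<noteq> 0} \<subseteq> S" unfolding S_def by (rule closure_subset)
    then have "f x = 0" using False by blast
    then show ?thesis by simp
  qed
  then show ?thesis by (intro exI[of _ "max K 0"]) simp
qed

theorem lemma6p1:
  fixes M :: "'a measure"
    and f0 :: "(real^'d) \<times> (real^'d) \<Rightarrow> real" and \<Gamma> R T :: real
    and \<theta> :: "real^'d \<Rightarrow> real" and \<epsilon> :: "nat \<Rightarrow> real"
    and X0 :: "nat \<Rightarrow> 'a \<Rightarrow> (real^'d) \<times> (real^'d)"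
    and B :: "nat \<Rightarrow> real \<Rightarrow> 'a \<Rightarrow> real^'d"
    and E :: "nat \<Rightarrow> nat \<Rightarrow> nat \<Rightarrow> 'a \<Rightarrow> real"
    and Act :: "nat \<Rightarrow> real \<Rightarrow> 'a \<Rightarrow> nat set"
    and \<phi> :: "real \<times> ((real^'d) \<times> (real^'d)) \<Rightarrow> real"
    and \<psi> :: "nat \<Rightarrow> real^'d \<Rightarrow> real"
  assumes M: "prob_space M"
    \<comment> \<open>initial density\<close>
    and f0_meas: "f0 \<in> borel_measurable borel"
    and f0_nonneg: "\<forall>z. 0 \<le> f0 z"
    and f0_bdd: "AE z in lborel. f0 z \<le> \<Gamma>"
    and f0_supp: "AE z in lborel. f0 z \<noteq> 0 \<longrightarrow> norm z \<le> R"
    \<comment> \<open>interaction kernel\<close>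
    and \<theta>_smooth: "C_inf \<theta>"
    and \<theta>_nonneg: "\<forall>x. 0 \<le> \<theta> x"
    and \<theta>_int: "(\<theta> has_integral 1) UNIV"
    and \<theta>_0: "\<theta> 0 = 0"
    and \<theta>_even: "\<forall>x. \<theta> (- x) = \<theta> x"
    and \<theta>_supp: "\<forall>x. \<theta> x \<noteq> 0 \<longrightarrow> norm x \<le> 1"
    \<comment> \<open>scaling\<close>
    and \<epsilon>_range: "\<forall>N. 0 < \<epsilon> N \<and> \<epsilon> N \<le> 1"
    and \<epsilon>_lim: "\<epsilon> \<longlonglongrightarrow> 0"
    and \<epsilon>_limsup: "limsup (\<lambda>N. ereal (1 / (\<epsilon> N ^ CARD('d) * real N))) \<le> 1"
    \<comment> \<open>i.i.d. initial data, independent Brownian motions\<close>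
    and X0_distr: "\<forall>i. distributed M lborel (X0 i) (\<lambda>z. ennreal (f0 z))"
    and B_BM: "\<forall>i. std_BM M (B i)"
    and X0_B_indep: "\<forall>i. indep_rv M borel (X0 i) (Pi\<^sub>M UNIV (\<lambda>_::real. borel)) (\<lambda>\<omega> t. B i t \<omega>)"
    and particles_indep: "prob_space.indep_vars M (\<lambda>_. borel \<Otimes>\<^sub>M Pi\<^sub>M UNIV (\<lambda>_::real. borel))
                            (\<lambda>i \<omega>. (X0 i \<omega>, \<lambda>t. B i t \<omega>)) UNIV"
    \<comment> \<open>exponential clocks of the jump (annihilation) mechanism of the N-particle system\<close>
    and E_distr: "\<forall>N i j. i < j \<longrightarrow> distributed M lborel (E N i j) (\<lambda>x. ennreal (exponential_density 1 x))"
    and E_indep: "\<forall>N. prob_space.indep_vars M (\<lambda>_. borel) (\<lambda>(i, j). E N i j) {(i, j). i < j}"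
    and E_particles_indep: "\<forall>N. indep_rv M
          (Pi\<^sub>M {(i, j). i < j} (\<lambda>_. borel)) (\<lambda>\<omega>. \<lambda>(i, j)\<in>{(i, j). i < j}. E N i j \<omega>)
          (Pi\<^sub>M UNIV (\<lambda>_. borel \<Otimes>\<^sub>M Pi\<^sub>M UNIV (\<lambda>_::real. borel))) (\<lambda>\<omega> i. (X0 i \<omega>, \<lambda>t. B i t \<omega>))"
    \<comment> \<open>active set of the N-particle system (random time-change construction)\<close>
    and Act_mono: "AE \<omega> in M. \<forall>N i s t. 0 \<le> s \<longrightarrow> s \<le> t \<longrightarrow> i \<in> Act N t \<omega> \<longrightarrow> i \<in> Act N s \<omega>"
    and Act_eq: "AE \<omega> in M. \<forall>N\<ge>1. \<forall>t\<ge>0. Act N t \<omega> = {1..N} -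
          {i. \<exists>j\<in>{1..N}. j \<noteq> i \<and>
             ennreal (E N (min i j) (max i j) \<omega>) \<le>
               (\<integral>\<^sup>+ s\<in>{0..t}. ennreal (if i \<in> Act N s \<omega> \<and> j \<in> Act N s \<omega>
                   then 2 / real N * mollif (\<epsilon> N) \<theta> (pos X0 B i s \<omega> - pos X0 B j s \<omega>) else 0) \<partial>lborel)}"
    \<comment> \<open>test functions\<close>
    and \<phi>_test: "C_c_inf \<phi>"
    and \<psi>_smooth: "\<forall>\<Lambda>. C_c_inf (\<psi> \<Lambda>)"
    and \<psi>_range: "\<forall>\<Lambda> v. 0 \<le> \<psi> \<Lambda> v \<and> \<psi> \<Lambda> v \<le> 1"
    and \<psi>_one: "\<forall>\<Lambda>. \<forall>v\<in>ball 0 (real \<Lambda>). \<psi> \<Lambda> v = 1"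
    and \<psi>_zero: "\<forall>\<Lambda>. \<forall>v. v \<notin> ball 0 (2 * real \<Lambda>) \<longrightarrow> \<psi> \<Lambda> v = 0"
  shows "(\<lambda>\<Lambda>. SUP N\<in>{1..}. \<integral>\<^sup>+ \<omega>. (\<integral>\<^sup>+ t\<in>{0..T}.
           ennreal (1 / (real N)\<^sup>2 * (\<Sum>i\<in>Act N t \<omega>. \<Sum>j\<in>Act N t \<omega> - {i}.
              mollif (\<epsilon> N) \<theta> (pos X0 B i t \<omega> - pos X0 B j t \<omega>) *
              \<bar>\<phi> (t, pos X0 B i t \<omega>, vel X0 B i t \<omega>) * (1 - \<psi> \<Lambda> (vel X0 B j t \<omega>))\<bar>)) \<partial>lborel) \<partial>M)
         \<longlonglongrightarrow> 0"
proof -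
  interpret prob_space M by (rule M)
  let ?PM = "Pi\<^sub>M UNIV (\<lambda>_::real. borel) :: (real \<Rightarrow> real^'d) measure"
  have th_cont: "continuous_on UNIV \<theta>" using \<theta>_smooth by (rule C_inf_cont)
  have th_meas[measurable]: "\<theta> \<in> borel_measurable borel" by (rule borel_measurable_continuous_onI[OF th_cont])
  have th_int: "(\<theta> has_integral 1) UNIV" by (rule \<theta>_int)
  have th_nn: "\<And>x. 0 \<le> \<theta> x" using \<theta>_nonneg by blast
  have psi_cont: "continuous_on UNIV (\<psi> L)" for L using \<psi>_smooth C_c_inf_def C_inf_cont by blast
  have psi_meas[measurable]: "\<psi> L \<in> borel_measurable borel" for L by (rule borel_measurable_continuous_onI[OF psi_cont])
  have mol_meas[measurable]: "mollif e \<theta> \<in> borel_measurable borel" for e unfolding mollif_def by measurable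
  have mol_nn: "0 \<le> mollif e \<theta> x" if "0 < e" for e x
    unfolding mollif_def using th_nn that by (intro divide_nonneg_nonneg) auto
  have mol_cont: "continuous_on UNIV (mollif e \<theta>)" for e
  proof -
    have c1: "continuous_on UNIV (\<lambda>x::real^'d. (1/e) *\<^sub>R x)" by (intro continuous_intros)
    have c2: "continuous_on UNIV (\<lambda>x. \<theta> ((1/e) *\<^sub>R x))" by (rule continuous_on_compose2[OF th_cont c1]) simp
    show ?thesis unfolding mollif_def using continuous_on_mult_right[OF c2, of "inverse (e ^ CARD('d))"]
      by (simp add: divide_inverse)
  qed
  have mol_cont_comp: "continuous_on S (\<lambda>x. mollif e \<theta> (g x))" if "continuous_on S g" for e S and g :: "real \<Rightarrow> real^'d"
    by (rule continuous_on_compose2[OF mol_cont that]) simp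
  have psi_cont_comp: "continuous_on S (\<lambda>x. \<psi> L (g x))" if "continuous_on S g" for L S and g :: "real \<Rightarrow> real^'d"
    by (rule continuous_on_compose2[OF psi_cont that]) simp
  obtain K where K0: "0 \<le> K" and K: "\<And>z. norm (\<phi> z) \<le> K"
    using C_c_inf_bounded[OF \<phi>_test] by blast
  define C where "C = ennreal \<Gamma> * emeasure lborel (cball (0::real^'d) R)"
  have C_fin: "ennreal K * C \<noteq> \<top>"
  proof -
    have "emeasure lborel (cball (0::real^'d) R) < \<top>" using emeasure_bounded_finite[of "cball (0::real^'d) R"] by simp
    then show ?thesis unfolding C_def by (simp add: ennreal_mult_eq_top_iff)
  qed
  define Gt where "Gt a t = (\<integral>\<^sup>+(x::real^'d). indicator {x. a \<le> norm x} x * ennreal (gauss_density t x) \<partial>lborel)" for a t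
  define Gint where "Gint L = (\<integral>\<^sup>+t\<in>{0..T}. Gt (real L - R) t \<partial>lborel)" for L :: nat
  have Gt_meas[measurable]: "Gt a \<in> borel_measurable lborel" for a
    unfolding Gt_def by (rule gauss_tail_meas)
  have tot: "(\<integral>\<^sup>+(x::real^'d). ennreal (gauss_density t x) \<partial>lborel) = 1" if "0 < t" for t
  proof -
    have D: "distributed M lborel (\<lambda>\<omega>. B 0 t \<omega> - B 0 0 \<omega>) (\<lambda>x. ennreal (gauss_density (t - 0) x))"
      using std_BM_distr[OF B_BM[rule_format, of 0], of 0 t] that by simp
    have "(\<integral>\<^sup>+(x::real^'d). ennreal (gauss_density t x) * 1 \<partial>lborel) = (\<integral>\<^sup>+\<omega>. 1 \<partial>M)"
      using distributed_nn_integral[OF D, of "\<lambda>_. 1"] by simp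
    then show ?thesis by (simp add: emeasure_space_1)
  qed
  have Gint_lim: "Gint \<longlonglongrightarrow> 0"
    using tail_lim[of R T, OF tot] unfolding Gint_def Gt_def by simp
  have Yall: "\<forall>i\<in>UNIV. random_variable (borel \<Otimes>\<^sub>M ?PM) (\<lambda>\<omega>. (X0 i \<omega>, \<lambda>t. B i t \<omega>))"
    and Yind: "indep_sets (\<lambda>i. {(\<lambda>\<omega>. (X0 i \<omega>, \<lambda>t. B i t \<omega>)) -` A \<inter> space M | A. A \<in> sets (borel \<Otimes>\<^sub>M ?PM)}) UNIV"
    using particles_indep[unfolded indep_vars_def2] by (blast, blast)
  have Ym[measurable]: "(\<lambda>\<omega>. (X0 i \<omega>, \<lambda>t. B i t \<omega>)) \<in> measurable M (borel \<Otimes>\<^sub>M ?PM)" for i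
    using Yall by simp
  have X0m[measurable]: "X0 i \<in> measurable M borel" for i
    using measurable_fst'[OF Ym[of i]] by simp
  have pathm[measurable]: "(\<lambda>\<omega> t. B i t \<omega>) \<in> measurable M ?PM" for i
    using measurable_snd'[OF Ym[of i]] by simp
  have Bm[measurable]: "B i s \<in> borel_measurable M" for i s using std_BM_meas[OF B_BM[rule_format, of i]] by simp
  have Bcont: "continuous_on {0..} (\<lambda>t. B i t \<omega>)" if "\<omega> \<in> space M" for i \<omega>
    using std_BM_cont[OF B_BM[rule_format, of i]] that by simp
  have fst_m[measurable]: "(fst :: (real^'d) \<times> (real^'d) \<Rightarrow> real^'d) \<in> borel_measurable borel"
    by (intro borel_measurable_continuous_onI continuous_intros)
  have snd_m[measurable]: "(snd :: (real^'d) \<times> (real^'d) \<Rightarrow> real^'d) \<in> borel_measurable borel"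
    by (intro borel_measurable_continuous_onI continuous_intros)
  have pos_m[measurable]: "(\<lambda>\<omega>. pos X0 B i t \<omega>) \<in> borel_measurable M" if "0 \<le> t" for i t
  proof -
    have "(\<lambda>\<omega>. fst (X0 i \<omega>) + t *\<^sub>R snd (X0 i \<omega>) + Ipath t (\<lambda>s. B i s \<omega>)) \<in> borel_measurable M"
      by measurable
    then show ?thesis
      by (rule measurable_cong[THEN iffD1, rotated]) (simp add: pos_eq[OF Bcont that])
  qed
  have vel_m[measurable]: "(\<lambda>\<omega>. vel X0 B i t \<omega>) \<in> borel_measurable M" for i t
    unfolding vel_def by measurable
  have indij: "measure M (((\<lambda>\<omega>. (X0 i \<omega>, \<lambda>t. B i t \<omega>)) -` A \<inter> space M) \<inter> ((\<lambda>\<omega>. (X0 j \<omega>, \<lambda>t. B j t \<omega>)) -` D \<inter> space M))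
        = measure M ((\<lambda>\<omega>. (X0 i \<omega>, \<lambda>t. B i t \<omega>)) -` A \<inter> space M) * measure M ((\<lambda>\<omega>. (X0 j \<omega>, \<lambda>t. B j t \<omega>)) -` D \<inter> space M)"
    if ij: "i \<noteq> j" and A: "A \<in> sets (borel \<Otimes>\<^sub>M ?PM)" and D: "D \<in> sets (borel \<Otimes>\<^sub>M ?PM)" for i j A D
  proof -
    define AA where "AA k = (if k = i then (\<lambda>\<omega>. (X0 i \<omega>, \<lambda>t. B i t \<omega>)) -` A \<inter> space M else (\<lambda>\<omega>. (X0 j \<omega>, \<lambda>t. B j t \<omega>)) -` D \<inter> space M)" for k
    have "prob (\<Inter>k\<in>{i, j}. AA k) = (\<Prod>k\<in>{i, j}. prob (AA k))"
      by (rule indep_setsD[OF Yind]) (use A D in \<open>auto simp: AA_def\<close>)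
    then show ?thesis using ij by (simp add: AA_def Int_commute)
  qed
  have bound: "(\<integral>\<^sup>+ \<omega>. (\<integral>\<^sup>+ t\<in>{0..T}.
           ennreal (1 / (real N)\<^sup>2 * (\<Sum>i\<in>Act N t \<omega>. \<Sum>j\<in>Act N t \<omega> - {i}.
              mollif (\<epsilon> N) \<theta> (pos X0 B i t \<omega> - pos X0 B j t \<omega>) *
              \<bar>\<phi> (t, pos X0 B i t \<omega>, vel X0 B i t \<omega>) * (1 - \<psi> L (vel X0 B j t \<omega>))\<bar>)) \<partial>lborel) \<partial>M)
       \<le> ennreal K * C * Gint L" if RL: "R < real L" and N1: "1 \<le> N" for L N
  proof (cases "0 \<le> T")
    case False
    then show ?thesis by simp
  next
    case T0: True
    define e where "e = \<epsilon> N"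
    have e: "0 < e" using \<epsilon>_range by (simp add: e_def)
    define F where "F t \<omega> = 1 / (real N)\<^sup>2 * (\<Sum>i\<in>{1..N}. \<Sum>j\<in>{1..N} - {i}.
        K * (mollif e \<theta> (pos X0 B i t \<omega> - pos X0 B j t \<omega>) * (1 - \<psi> L (vel X0 B j t \<omega>))))" for t \<omega>
    have psi1: "0 \<le> 1 - \<psi> L v" for v using \<psi>_range by simp
    have F_nn: "0 \<le> F t \<omega>" for t \<omega>
      unfolding F_def using K0 mol_nn[OF e] psi1 by (intro mult_nonneg_nonneg sum_nonneg) auto
    have AEgood: "AE \<omega> in M. \<forall>t\<in>{0..T}. Act N t \<omega> \<subseteq> {1..N}"
      using Act_eq
    proof eventually_elim
      case (elim \<omega>)
      show ?case
      proof
        fix t :: real assume "t \<in> {0..T}"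
        then have "0 \<le> t" by simp
        then show "Act N t \<omega> \<subseteq> {1..N}" using elim N1 by blast
      qed
    qed
    have step1: "(\<integral>\<^sup>+ \<omega>. (\<integral>\<^sup>+ t\<in>{0..T}.
           ennreal (1 / (real N)\<^sup>2 * (\<Sum>i\<in>Act N t \<omega>. \<Sum>j\<in>Act N t \<omega> - {i}.
              mollif (\<epsilon> N) \<theta> (pos X0 B i t \<omega> - pos X0 B j t \<omega>) *
              \<bar>\<phi> (t, pos X0 B i t \<omega>, vel X0 B i t \<omega>) * (1 - \<psi> L (vel X0 B j t \<omega>))\<bar>)) \<partial>lborel) \<partial>M)
        \<le> (\<integral>\<^sup>+ \<omega>. (\<integral>\<^sup>+ t. ennreal (F t \<omega>) * indicator {0..T} t \<partial>lborel) \<partial>M)"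
    proof (rule nn_integral_mono_AE)
      show "AE \<omega> in M. (\<integral>\<^sup>+ t\<in>{0..T}.
           ennreal (1 / (real N)\<^sup>2 * (\<Sum>i\<in>Act N t \<omega>. \<Sum>j\<in>Act N t \<omega> - {i}.
              mollif (\<epsilon> N) \<theta> (pos X0 B i t \<omega> - pos X0 B j t \<omega>) *
              \<bar>\<phi> (t, pos X0 B i t \<omega>, vel X0 B i t \<omega>) * (1 - \<psi> L (vel X0 B j t \<omega>))\<bar>)) \<partial>lborel)
          \<le> (\<integral>\<^sup>+ t. ennreal (F t \<omega>) * indicator {0..T} t \<partial>lborel)"
        using AEgood
      proof eventually_elim
        case (elim \<omega>)
        show ?case
        proof (rule nn_integral_mono)
          fix t
          show "ennreal (1 / (real N)\<^sup>2 * (\<Sum>i\<in>Act N t \<omega>. \<Sum>j\<in>Act N t \<omega> - {i}.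
              mollif (\<epsilon> N) \<theta> (pos X0 B i t \<omega> - pos X0 B j t \<omega>) *
              \<bar>\<phi> (t, pos X0 B i t \<omega>, vel X0 B i t \<omega>) * (1 - \<psi> L (vel X0 B j t \<omega>))\<bar>)) * indicator {0..T} t
             \<le> ennreal (F t \<omega>) * indicator {0..T} t"
          proof (cases "t \<in> {0..T}")
            case False then show ?thesis by simp
          next
            case True
            have sub: "Act N t \<omega> \<subseteq> {1..N}" using elim True by blast
            let ?a = "\<lambda>i j. mollif e \<theta> (pos X0 B i t \<omega> - pos X0 B j t \<omega>) *
              \<bar>\<phi> (t, pos X0 B i t \<omega>, vel X0 B i t \<omega>) * (1 - \<psi> L (vel X0 B j t \<omega>))\<bar>"
            let ?b = "\<lambda>i j. K * (mollif e \<theta> (pos X0 B i t \<omega> - pos X0 B j t \<omega>) * (1 - \<psi> L (vel X0 B j t \<omega>)))"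
            have a_nn: "0 \<le> ?a i j" for i j using mol_nn[OF e] by simp
            have ab: "?a i j \<le> ?b i j" for i j
            proof -
              have "\<bar>\<phi> (t, pos X0 B i t \<omega>, vel X0 B i t \<omega>) * (1 - \<psi> L (vel X0 B j t \<omega>))\<bar>
                  = \<bar>\<phi> (t, pos X0 B i t \<omega>, vel X0 B i t \<omega>)\<bar> * (1 - \<psi> L (vel X0 B j t \<omega>))"
                using psi1 by (simp add: abs_mult)
              also have "\<dots> \<le> K * (1 - \<psi> L (vel X0 B j t \<omega>))"
                using K[of "(t, pos X0 B i t \<omega>, vel X0 B i t \<omega>)"] psi1 by (intro mult_right_mono) auto
              finally have h: "\<bar>\<phi> (t, pos X0 B i t \<omega>, vel X0 B i t \<omega>) * (1 - \<psi> L (vel X0 B j t \<omega>))\<bar> \<le> K * (1 - \<psi> L (vel X0 B j t \<omega>))" .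
              show ?thesis using mult_left_mono[OF h mol_nn[OF e, of "pos X0 B i t \<omega> - pos X0 B j t \<omega>"]]
                by (simp add: mult.left_commute mult.assoc)
            qed
            have "(\<Sum>i\<in>Act N t \<omega>. \<Sum>j\<in>Act N t \<omega> - {i}. ?a i j) \<le> (\<Sum>i\<in>Act N t \<omega>. \<Sum>j\<in>{1..N} - {i}. ?a i j)"
              using sub a_nn by (intro sum_mono sum_mono2) auto
            also have "\<dots> \<le> (\<Sum>i\<in>{1..N}. \<Sum>j\<in>{1..N} - {i}. ?a i j)"
              using sub a_nn by (intro sum_mono2 sum_nonneg) auto
            also have "\<dots> \<le> (\<Sum>i\<in>{1..N}. \<Sum>j\<in>{1..N} - {i}. ?b i j)"
              using ab by (intro sum_mono) auto
            finally have "1 / (real N)\<^sup>2 * (\<Sum>i\<in>Act N t \<omega>. \<Sum>j\<in>Act N t \<omega> - {i}. ?a i j) \<le> F t \<omega>"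
              unfolding F_def by (intro mult_left_mono) auto
            then show ?thesis using True by (simp add: e_def ennreal_leI)
          qed
        qed
      qed
    qed
    have Fm: "F t \<in> borel_measurable M" if "t \<in> {0..T}" for t
    proof -
      have t0: "0 \<le> t" using that by simp
      have [measurable]: "\<And>i. pos X0 B i t \<in> borel_measurable M" using pos_m[OF t0] by simp
      show ?thesis unfolding F_def by measurable
    qed
    have Fcont: "continuous_on {0..T} (\<lambda>t. F t \<omega>)" if w: "\<omega> \<in> space M" for \<omega>
      unfolding F_def
      by (intro continuous_intros continuous_on_compose2[OF mol_cont] continuous_on_compose2[OF psi_cont]
          pos_cont vel_cont Bcont[OF w]) auto
    have jm: "(\<lambda>x. ennreal (F (fst x) (snd x)) * indicator {0..T} (fst x)) \<in> borel_measurable (lborel \<Otimes>\<^sub>M M)"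
    proof -
      have c: "(\<lambda>x. F (max 0 (min T (fst x))) (snd x)) \<in> borel_measurable (lborel \<Otimes>\<^sub>M M)"
        by (rule caratheodory_meas[OF T0 Fm Fcont])
      have "(\<lambda>x. ennreal (F (max 0 (min T (fst x))) (snd x)) * indicator {0..T} (fst x)) \<in> borel_measurable (lborel \<Otimes>\<^sub>M M)"
        using c by measurable
      then show ?thesis
        by (rule measurable_cong[THEN iffD1, rotated]) (auto simp: indicator_def)
    qed
    interpret LM: pair_sigma_finite lborel M by unfold_locales
    have step3: "(\<integral>\<^sup>+ \<omega>. (\<integral>\<^sup>+ t. ennreal (F t \<omega>) * indicator {0..T} t \<partial>lborel) \<partial>M)
        = (\<integral>\<^sup>+ t. (\<integral>\<^sup>+ \<omega>. ennreal (F t \<omega>) * indicator {0..T} t \<partial>M) \<partial>lborel)"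
      using LM.Fubini[OF jm] by simp
    have pert: "(\<integral>\<^sup>+ \<omega>. ennreal (F t \<omega>) \<partial>M) \<le> ennreal K * C * Gt (real L - R) t" if t: "t \<in> {0..T}" for t
    proof -
      have t0: "0 \<le> t" using t by simp
      let ?m = "\<lambda>i j \<omega>. mollif e \<theta> (pos X0 B i t \<omega> - pos X0 B j t \<omega>) * (1 - \<psi> L (vel X0 B j t \<omega>))"
      have m_nn: "0 \<le> ?m i j \<omega>" for i j \<omega> using mol_nn[OF e] psi1 by simp
      have mm[measurable]: "(\<lambda>\<omega>. ennreal (?m i j \<omega>)) \<in> borel_measurable M" for i j
      proof -
        have [measurable]: "\<And>i. pos X0 B i t \<in> borel_measurable M" using pos_m[OF t0] by simp
        show ?thesis by measurable
      qed
      have eqF: "ennreal (F t \<omega>) = ennreal (1 / (real N)\<^sup>2) * (\<Sum>i\<in>{1..N}. \<Sum>j\<in>{1..N} - {i}. ennreal K * ennreal (?m i j \<omega>))" for \<omega>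
      proof -
        have e1: "ennreal (\<Sum>j\<in>A. K * ?m i j \<omega>) = (\<Sum>j\<in>A. ennreal (K * ?m i j \<omega>))" for i A
          by (rule sum_ennreal[symmetric]) (use K0 m_nn in auto)
        have e2: "ennreal (\<Sum>i\<in>{1..N}. \<Sum>j\<in>{1..N}-{i}. K * ?m i j \<omega>) = (\<Sum>i\<in>{1..N}. ennreal (\<Sum>j\<in>{1..N}-{i}. K * ?m i j \<omega>))"
          by (rule sum_ennreal[symmetric]) (use K0 m_nn in \<open>auto intro!: sum_nonneg\<close>)
        have e3: "ennreal (K * ?m i j \<omega>) = ennreal K * ennreal (?m i j \<omega>)" for i j
          by (rule ennreal_mult'[OF K0])
        have "ennreal (F t \<omega>) = ennreal (1 / (real N)\<^sup>2) * ennreal (\<Sum>i\<in>{1..N}. \<Sum>j\<in>{1..N}-{i}. K * ?m i j \<omega>)"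
          unfolding F_def by (rule ennreal_mult') simp
        then show ?thesis unfolding e2 e1 e3 .
      qed
      have single: "(\<integral>\<^sup>+ \<omega>. ennreal (?m i j \<omega>) \<partial>M) \<le> C * Gt (real L - R) t" if ij: "i \<noteq> j" for i j
      proof -
        have "(\<integral>\<^sup>+ \<omega>. ennreal (?m i j \<omega>) \<partial>M) \<le> C * (\<integral>\<^sup>+ \<omega>. ennreal (1 - \<psi> L (vel X0 B j t \<omega>)) \<partial>M)"
          unfolding C_def
          by (rule key_bound[where g="\<lambda>v. 1 - \<psi> L v", OF M th_meas th_nn th_int e f0_meas f0_bdd f0_supp
               X0_distr[rule_format] X0_B_indep[rule_format] Ym Ym indij[OF ij] Bcont Bcont _ psi1 t0])
             (assumption | intro borel_measurable_diff borel_measurable_const psi_meas)+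
        also have "\<dots> \<le> C * Gt (real L - R) t"
        proof (rule mult_left_mono)
          show "(\<integral>\<^sup>+ \<omega>. ennreal (1 - \<psi> L (vel X0 B j t \<omega>)) \<partial>M) \<le> Gt (real L - R) t"
            unfolding Gt_def
            by (rule vel_tail[OF M X0_distr[rule_format] f0_supp B_BM[rule_format] psi_meas \<psi>_range[rule_format] \<psi>_one[rule_format] RL t0])
        qed simp
        finally show ?thesis .
      qed
      have "(\<integral>\<^sup>+ \<omega>. ennreal (F t \<omega>) \<partial>M)
          = ennreal (1 / (real N)\<^sup>2) * (\<Sum>i\<in>{1..N}. \<Sum>j\<in>{1..N} - {i}. ennreal K * (\<integral>\<^sup>+ \<omega>. ennreal (?m i j \<omega>) \<partial>M))"
        unfolding eqF
        by (simp add: nn_integral_cmult nn_integral_sum)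
      also have "\<dots> \<le> ennreal (1 / (real N)\<^sup>2) * (\<Sum>i\<in>{1..N}. \<Sum>j\<in>{1..N}. ennreal K * (C * Gt (real L - R) t))"
      proof (intro mult_left_mono sum_mono order_refl)
        fix i assume "i \<in> {1..N}"
        have "(\<Sum>j\<in>{1..N} - {i}. ennreal K * (\<integral>\<^sup>+ \<omega>. ennreal (?m i j \<omega>) \<partial>M))
            \<le> (\<Sum>j\<in>{1..N} - {i}. ennreal K * (C * Gt (real L - R) t))"
          using single by (intro sum_mono mult_left_mono) auto
        also have "\<dots> \<le> (\<Sum>j\<in>{1..N}. ennreal K * (C * Gt (real L - R) t))"
          by (intro sum_mono2) auto
        finally show "(\<Sum>j\<in>{1..N} - {i}. ennreal K * (\<integral>\<^sup>+ \<omega>. ennreal (?m i j \<omega>) \<partial>M))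
            \<le> (\<Sum>j\<in>{1..N}. ennreal K * (C * Gt (real L - R) t))" .
      qed simp
      also have "\<dots> = ennreal (1 / (real N)\<^sup>2) * (of_nat N * of_nat N) * (ennreal K * (C * Gt (real L - R) t))"
        by (simp add: mult.assoc)
      also have "ennreal (1 / (real N)\<^sup>2) * (of_nat N * of_nat N) = 1"
      proof -
        have "ennreal (1 / (real N)\<^sup>2) * (of_nat N * of_nat N) = ennreal (1 / (real N)\<^sup>2 * (real N * real N))"
        proof -
          have "(of_nat N * of_nat N :: ennreal) = ennreal (real N * real N)"
            by (simp add: ennreal_of_nat_eq_real_of_nat ennreal_mult)
          then show ?thesis by (simp add: ennreal_mult[symmetric])
        qed
        also have "1 / (real N)\<^sup>2 * (real N * real N) = 1" using N1 by (simp add: power2_eq_square)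
        finally show ?thesis by simp
      qed
      finally show ?thesis by (simp add: mult.assoc)
    qed
    have step4: "(\<integral>\<^sup>+ t. (\<integral>\<^sup>+ \<omega>. ennreal (F t \<omega>) * indicator {0..T} t \<partial>M) \<partial>lborel)
        \<le> (\<integral>\<^sup>+ t. (ennreal K * C) * (Gt (real L - R) t * indicator {0..T} t) \<partial>lborel)"
    proof (rule nn_integral_mono)
      fix t
      show "(\<integral>\<^sup>+ \<omega>. ennreal (F t \<omega>) * indicator {0..T} t \<partial>M) \<le> (ennreal K * C) * (Gt (real L - R) t * indicator {0..T} t)"
      proof (cases "t \<in> {0..T}")
        case False then show ?thesis by simp
      next
        case True
        then show ?thesis using pert[OF True] by (simp add: mult.assoc)
      qed
    qed
    have step5: "(\<integral>\<^sup>+ t. (ennreal K * C) * (Gt (real L - R) t * indicator {0..T} t) \<partial>lborel) = ennreal K * C * Gint L"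
      unfolding Gint_def by (rule nn_integral_cmult) (intro borel_measurable_times_ennreal Gt_meas borel_measurable_indicator, simp)
    show ?thesis
      using order_trans[OF step1[unfolded step3] step4] unfolding step5 .
  qed
  define S where "S = (\<lambda>L. SUP N\<in>{1..}. \<integral>\<^sup>+ \<omega>. (\<integral>\<^sup>+ t\<in>{0..T}.
           ennreal (1 / (real N)\<^sup>2 * (\<Sum>i\<in>Act N t \<omega>. \<Sum>j\<in>Act N t \<omega> - {i}.
              mollif (\<epsilon> N) \<theta> (pos X0 B i t \<omega> - pos X0 B j t \<omega>) *
              \<bar>\<phi> (t, pos X0 B i t \<omega>, vel X0 B i t \<omega>) * (1 - \<psi> L (vel X0 B j t \<omega>))\<bar>)) \<partial>lborel) \<partial>M)"
  have "S \<longlonglongrightarrow> 0"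
  proof (rule tendsto_sandwich[of "\<lambda>_. 0" S sequentially "\<lambda>L. ennreal K * C * Gint L" 0])
    show "\<forall>\<^sub>F n in sequentially. (0::ennreal) \<le> S n" by simp
  next
    obtain L0 :: nat where L0: "R < real L0" using reals_Archimedean2 by blast
    show "\<forall>\<^sub>F L in sequentially. S L \<le> ennreal K * C * Gint L"
    proof (rule eventually_sequentiallyI[of L0])
      fix L assume "L0 \<le> L"
      then have "R < real L" using L0 by linarith
      then show "S L \<le> ennreal K * C * Gint L"
        unfolding S_def by (intro SUP_least bound) auto
    qed
  next
    show "(\<lambda>_. 0::ennreal) \<longlonglongrightarrow> 0" by simp
  next
    have "(\<lambda>L. ennreal K * C * Gint L) \<longlonglongrightarrow> ennreal K * C * 0"
    proof -
      have C_lt: "ennreal K * C < \<top>" using C_fin by (simp add: top.not_eq_extremum)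
      show ?thesis by (rule ennreal_tendsto_cmult[OF C_lt Gint_lim])
    qed
    then show "(\<lambda>L. ennreal K * C * Gint L) \<longlonglongrightarrow> 0" by simp
  qed
  then show ?thesis unfolding S_def .
qed

end
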